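(* Let $K$ be a field and $a\in K^{{\mathbb N}}$ a nonzero $K$-recurrence sequence of order $d$. (a) If $K$ has characteristic $0$ and $a$ is nondegenerate, then ${\mathcal Z}(a)$ does not contain a $(d-1)$-balanced subset. (b) If $K$ has positive characteristic and $a$ is simple and nondegenerate, then ${\mathcal Z}(a)$ does not contain a $(d-1)$-balanced subset.
   Context: ${\mathbb N}=\{0,1,2,\dots\}$, ${\mathcal Z}(a)=\{n\in{\mathbb N}\mid a(n)=0\}$. The minimum polynomial $P_a$ is the monic generator of $\{P\in K[E]\mid P(E)a=0\}$, $(Ea)(n)=a(n+1)$; its degree is the order of $a$. $a$ is simple if $P_a$ has distinct roots and nondegenerate if its roots are nonzero and no quotient of two distinct roots is a root of unity. For an integer $e\ge0$, an $e$-balanced subset of ${\mathbb N}$ is a set $\{m_0+k_1m_1+\cdots+k_em_e\mid k_1,\dots,k_e\in\{0,1\}\}$ with $m_0\in{\mathbb N}$ and $m_1,\dots,m_e$ positive integers. *)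

theory Defs
  imports "HOL-Computational_Algebra.Polynomial" "HOL-Algebra.Algebraic_Closure_Type"
begin

definition apply_shift :: "'a::field poly \<Rightarrow> (nat \<Rightarrow> 'a) \<Rightarrow> nat \<Rightarrow> 'a" where
  "apply_shift P a n = (\<Sum>i\<le>degree P. coeff P i * a (n + i))"

definition annihilates :: "'a::field poly \<Rightarrow> (nat \<Rightarrow> 'a) \<Rightarrow> bool" where
  "annihilates P a \<longleftrightarrow> (\<forall>n. apply_shift P a n = 0)"

definition is_recurrence :: "(nat \<Rightarrow> 'a::field) \<Rightarrow> bool" where
  "is_recurrence a \<longleftrightarrow> (\<exists>P. P \<noteq> 0 \<and> annihilates P a)"

definition min_poly :: "(nat \<Rightarrow> 'a::field) \<Rightarrow> 'a poly" where
  "min_poly a = (THE P. lead_coeff P = 1 \<and> annihilates P a \<and> (\<forall>Q. annihilates Q a \<longrightarrow> P dvd Q))"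

definition rec_order :: "(nat \<Rightarrow> 'a::field) \<Rightarrow> nat" where
  "rec_order a = degree (min_poly a)"

definition zero_set :: "(nat \<Rightarrow> 'a::zero) \<Rightarrow> nat set" where
  "zero_set a = {n. a n = 0}"

definition min_poly_roots :: "(nat \<Rightarrow> 'a::field) \<Rightarrow> 'a alg_closure set" where
  "min_poly_roots a = {x. poly (map_poly to_ac (min_poly a)) x = 0}"

definition simple_rec :: "(nat \<Rightarrow> 'a::field) \<Rightarrow> bool" where
  "simple_rec a \<longleftrightarrow> (\<forall>x\<in>min_poly_roots a. order x (map_poly to_ac (min_poly a)) = 1)"

definition nondegenerate :: "(nat \<Rightarrow> 'a::field) \<Rightarrow> bool" where
  "nondegenerate a \<longleftrightarrow>
     (\<forall>x\<in>min_poly_roots a. x \<noteq> 0) \<and>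
     (\<forall>x\<in>min_poly_roots a. \<forall>y\<in>min_poly_roots a. x \<noteq> y \<longrightarrow>
        \<not> (\<exists>n::nat. n > 0 \<and> (x / y) ^ n = 1))"

definition balanced_set :: "nat \<Rightarrow> nat \<Rightarrow> (nat \<Rightarrow> nat) \<Rightarrow> nat set" where
  "balanced_set e m0 m = {m0 + (\<Sum>i=1..e. k i * m i) | k. \<forall>i\<in>{1..e}. k i \<in> {0, 1}}"

definition is_balanced :: "nat \<Rightarrow> nat set \<Rightarrow> bool" where
  "is_balanced e S \<longleftrightarrow> (\<exists>m0 m. (\<forall>i\<in>{1..e}. m i > 0) \<and> S = balanced_set e m0 m)"

end

theory Submission imports Defs "HOL-Computational_Algebra.Computational_Algebra"
begin

lemma apply_shift_ge:
  assumes "degree P \<le> N"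
  shows "apply_shift P a n = (\<Sum>i\<le>N. coeff P i * a (n + i))"
proof -
  have "(\<Sum>i\<le>N. coeff P i * a (n + i)) = (\<Sum>i\<le>degree P. coeff P i * a (n + i))"
    by (rule sum.mono_neutral_right) (use assms in \<open>auto simp: coeff_eq_0 not_le\<close>)
  then show ?thesis by (simp add: apply_shift_def)
qed

lemma apply_shift_add: "apply_shift (P + Q) a n = apply_shift P a n + apply_shift Q a n"
proof -
  let ?N = "max (degree P) (degree Q)"
  have "degree (P + Q) \<le> ?N" by (rule degree_add_le) auto
  then show ?thesis
    by (simp add: apply_shift_ge[of _ ?N] distrib_right sum.distrib)
qed

lemma apply_shift_smult: "apply_shift (smult c P) a n = c * apply_shift P a n"
  by (simp add: apply_shift_ge[of _ "degree P"] sum_distrib_left mult.assoc)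

lemma apply_shift_pCons: "apply_shift (pCons c P) a n = c * a n + apply_shift P a (Suc n)"
proof -
  have "apply_shift (pCons c P) a n = (\<Sum>i\<le>Suc (degree P). coeff (pCons c P) i * a (n + i))"
    by (rule apply_shift_ge) (simp add: degree_pCons_le)
  also have "\<dots> = c * a n + (\<Sum>i\<le>degree P. coeff P i * a (Suc n + i))"
    by (subst sum.atMost_Suc_shift) simp
  finally show ?thesis by (simp add: apply_shift_def)
qed

lemma apply_shift_0 [simp]: "apply_shift 0 a n = 0"
  by (simp add: apply_shift_def)

lemma apply_shift_const: "apply_shift [:c:] a n = c * a n"
  by (simp add: apply_shift_def)

lemma apply_shift_mult: "apply_shift (P * Q) a n = apply_shift P (apply_shift Q a) n"
proof (induction P arbitrary: n)
  case 0
  then show ?case by simp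
next
  case (pCons c P)
  have "pCons c P * Q = smult c Q + pCons 0 (P * Q)" by simp
  then show ?case
    by (simp only: apply_shift_add apply_shift_smult apply_shift_pCons pCons.IH) simp
qed

lemma apply_shift_zero_seq [simp]: "apply_shift P (\<lambda>_. 0) n = 0"
  by (simp add: apply_shift_def)

lemma annihilates_mult: "annihilates P a \<Longrightarrow> annihilates (Q * P) a"
proof -
  assume "annihilates P a"
  then have "apply_shift P a = (\<lambda>_. 0)" by (auto simp: annihilates_def)
  then show ?thesis by (simp add: annihilates_def apply_shift_mult)
qed

lemma annihilates_add: "annihilates P a \<Longrightarrow> annihilates Q a \<Longrightarrow> annihilates (P + Q) a"
  by (simp add: annihilates_def apply_shift_add)

lemma apply_shift_monom: "apply_shift (monom 1 k) a n = a (n + k)"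
  proof (induction k arbitrary: n)
  case 0 then show ?case by (simp add: apply_shift_def)
next
  case (Suc k) then show ?case by (simp only: monom_Suc apply_shift_pCons) simp
qed

lemma annihilates_smult: "annihilates P a \<Longrightarrow> annihilates (smult c P) a"
  by (simp add: annihilates_def apply_shift_smult)

lemma monic_dvd_antisym:
  fixes R M :: "'a::field poly"
  assumes "R dvd M" "M dvd R" "lead_coeff R = 1" "lead_coeff M = 1"
  shows "R = M"
proof -
  obtain q where q: "M = R * q" using assms(1) by blast
  have R0: "R \<noteq> 0" "M \<noteq> 0" using assms by auto
  then have q0: "q \<noteq> 0" using q by auto
  have "degree M \<le> degree R" using assms(2) R0 by (simp add: dvd_imp_degree_le)
  then have "degree q = 0" using q R0 q0 by (simp add: degree_mult_eq)
  then obtain c where c: "q = [:c:]" by (metis degree_eq_zeroE)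
  have "lead_coeff M = lead_coeff R * c" using q c by (simp add: lead_coeff_mult)
  then have "c = 1" using assms by simp
  then show ?thesis using q c by simp
qed

lemma min_poly_props:
  assumes "is_recurrence a"
  shows "lead_coeff (min_poly a) = 1 \<and> annihilates (min_poly a) a \<and> (\<forall>Q. annihilates Q a \<longrightarrow> min_poly a dvd Q)"
proof -
  define d where "d = (LEAST d. \<exists>P. P \<noteq> 0 \<and> annihilates P a \<and> degree P = d)"
  from assms obtain P0 where "P0 \<noteq> 0" "annihilates P0 a" by (auto simp: is_recurrence_def)
  then have "\<exists>P. P \<noteq> 0 \<and> annihilates P a \<and> degree P = degree P0" by blast
  then have "\<exists>P. P \<noteq> 0 \<and> annihilates P a \<and> degree P = d"
    unfolding d_def by (rule LeastI)
  then obtain P where P: "P \<noteq> 0" "annihilates P a" "degree P = d" by blast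
  have dmin: "d \<le> degree Q" if "Q \<noteq> 0" "annihilates Q a" for Q
    unfolding d_def by (rule Least_le) (use that in auto)
  define M where "M = smult (inverse (lead_coeff P)) P"
  have M0: "M \<noteq> 0" using P(1) by (simp add: M_def)
  have Mlc: "lead_coeff M = 1" using P(1) by (simp add: M_def)
  have Mann: "annihilates M a" using P by (simp add: M_def annihilates_smult)
  have Mdeg: "degree M = d" using P(1) by (simp add: M_def P(3)[symmetric])
  have Mdvd: "M dvd Q" if "annihilates Q a" for Q
  proof -
    have eq: "Q = (Q div M) * M + Q mod M" by simp
    have "annihilates (Q mod M) a"
      unfolding annihilates_def
    proof
      fix n
      have "apply_shift Q a n = apply_shift ((Q div M) * M) a n + apply_shift (Q mod M) a n"
        by (subst eq) (simp only: apply_shift_add)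
      moreover have "annihilates ((Q div M) * M) a" by (rule annihilates_mult[OF Mann])
      ultimately show "apply_shift (Q mod M) a n = 0"
        using that by (simp add: annihilates_def)
    qed
    then have "Q mod M = 0"
      using degree_mod_less[OF M0, of Q] dmin[of "Q mod M"] Mdeg by fastforce
    then show ?thesis by (simp add: mod_eq_0_iff_dvd)
  qed
  have "\<exists>!R. lead_coeff R = 1 \<and> annihilates R a \<and> (\<forall>Q. annihilates Q a \<longrightarrow> R dvd Q)"
  proof
    show "lead_coeff M = 1 \<and> annihilates M a \<and> (\<forall>Q. annihilates Q a \<longrightarrow> M dvd Q)"
      using Mlc Mann Mdvd by blast
  next
    fix R assume R: "lead_coeff R = 1 \<and> annihilates R a \<and> (\<forall>Q. annihilates Q a \<longrightarrow> R dvd Q)"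
    then have "R dvd M" "M dvd R" using Mann Mdvd by auto
    then show "R = M" using R Mlc by (intro monic_dvd_antisym) auto
  qed
  then have "lead_coeff (min_poly a) = 1 \<and> annihilates (min_poly a) a \<and> (\<forall>Q. annihilates Q a \<longrightarrow> min_poly a dvd Q)"
    unfolding min_poly_def by (rule theI')
  then show ?thesis by blast
qed

lemma T_props:
  fixes l :: "'b::field"
  assumes "T = monom 1 mm + [:-(l^mm):]" "mm > 0"
  shows "T \<noteq> 0" "poly T x = x^mm - l^mm" "apply_shift T b n = b (n + mm) - l^mm * b n"
proof -
  have "degree T = mm" using assms by (simp add: degree_add_eq_left degree_monom_eq)
  then show "T \<noteq> 0" using assms(2) by auto
  show "poly T x = x^mm - l^mm" using assms(1) by (simp add: poly_monom)
  show "apply_shift T b n = b (n + mm) - l^mm * b n"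
    using assms(1) by (simp add: apply_shift_add apply_shift_monom apply_shift_const)
qed

lemma no_double_root:
  fixes P :: "'b::field poly"
  assumes "P \<noteq> 0" "T = monom 1 mm + [:-(l^mm):]" "mm > 0" "l \<noteq> 0"
    "[:-l,1:]^2 dvd P" "[:-l,1:]^2 dvd T"
    "(\<forall>x. poly P x = 0 \<longrightarrow> order x P \<le> 1) \<or> (\<forall>k>0. (of_nat k::'b) \<noteq> 0)"
  shows False
  using assms(7)
proof
  assume sq: "\<forall>x. poly P x = 0 \<longrightarrow> order x P \<le> 1"
  have "[:-l,1:] dvd [:-l,1:]^2" by (rule dvd_power) auto
  then have "[:-l,1:] dvd P" using assms(5) by (rule dvd_trans)
  then have "poly P l = 0" by (simp add: poly_eq_0_iff_dvd)
  then have ol: "order l P \<le> 1" using sq by auto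
  have "[:-l,1:]^Suc (order l P) dvd [:-l,1:]^2" by (rule power_le_dvd[OF dvd_refl]) (use ol in simp)
  then have "[:-l,1:]^Suc (order l P) dvd P" using assms(5) by (rule dvd_trans)
  then show False using order_2[OF assms(1)] by blast
next
  assume ch: "\<forall>k>0. (of_nat k::'b) \<noteq> 0"
  from assms(6) obtain W where "T = [:-l,1:]^2 * W" by (rule dvdE)
  then have W: "T = [:-l,1:] * ([:-l,1:] * W)" by (simp only: power2_eq_square mult.assoc)
  have "pderiv T = [:-l,1:] * pderiv ([:-l,1:] * W) + ([:-l,1:] * W) * pderiv [:-l,1:]"
    by (subst W) (rule pderiv_mult)
  then have "poly (pderiv T) l = 0" by (simp only: poly_add poly_mult) simp
  moreover have "pderiv T = monom (of_nat mm) (mm - 1)"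
    unfolding assms(2) pderiv_add pderiv_monom by simp
  then have "poly (pderiv T) l = of_nat mm * l^(mm-1)" by (simp add: poly_monom)
  moreover have "(of_nat mm :: 'b) \<noteq> 0" using ch assms(3) by auto
  ultimately show False using assms(4) by simp
qed

lemma annihilates_lin: "annihilates [:-l,1:] b \<Longrightarrow> b (Suc n) = l * b n"
  by (auto simp: annihilates_def apply_shift_pCons apply_shift_const dest: spec[of _ n])

lemma geo_from_T:
  fixes P :: "'b::alg_closed_field poly"
  assumes "P \<noteq> 0" "annihilates P b" "annihilates T b" "T = monom 1 mm + [:-(l^mm):]" "mm > 0"
    "poly P l = 0"
    "\<forall>x. poly P x = 0 \<longrightarrow> x \<noteq> 0"
    "\<forall>x y. poly P x = 0 \<longrightarrow> poly P y = 0 \<longrightarrow> x \<noteq> y \<longrightarrow> \<not>(\<exists>n>0. (x/y)^n = 1)"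
    "(\<forall>x. poly P x = 0 \<longrightarrow> order x P \<le> 1) \<or> (\<forall>k>0. (of_nat k::'b) \<noteq> 0)"
  shows "b (Suc n) = l * b n"
proof -
  have rec: "is_recurrence b" using assms(1,2) by (auto simp: is_recurrence_def)
  define M where "M = min_poly b"
  from min_poly_props[OF rec] assms(2,3) have M: "lead_coeff M = 1" "annihilates M b" "M dvd P" "M dvd T"
    unfolding M_def by auto
  have T0: "T \<noteq> 0" and Tp: "\<And>x. poly T x = x^mm - l^mm" using T_props[OF assms(4,5)] by auto
  have l0: "l \<noteq> 0" using assms(6,7) by auto
  have onlyl: "x = l" if "poly M x = 0" for x
  proof -
    have "poly P x = 0" using that M(3) by (auto elim!: dvdE)
    moreover have "poly T x = 0" using that M(4) by (auto elim!: dvdE)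
    then have "x^mm = l^mm" using Tp by simp
    ultimately show ?thesis
    proof (cases "x = l")
      case False
      have "(x/l)^mm = 1" using \<open>x^mm = l^mm\<close> l0 by (simp add: power_divide)
      then show ?thesis using assms(8) \<open>poly P x = 0\<close> assms(6) False assms(5) by blast
    qed
  qed
  show ?thesis
  proof (cases "degree M = 0")
    case True
    then have "M = [:1:]" using M(1) by (metis degree_eq_zeroE lead_coeff_pCons(2) pCons_0_0)
    then have "\<forall>k. b k = 0" using M(2) by (auto simp: annihilates_def apply_shift_const)
    then show ?thesis by simp
  next
    case False
    then obtain x where "poly M x = 0" using alg_closed_imp_poly_has_root by blast
    then have "poly M l = 0" using onlyl by blast
    then obtain H where H: "M = [:-l,1:] * H" by (metis dvdE poly_eq_0_iff_dvd)
    have M0: "M \<noteq> 0" using M(1) by auto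
    have "degree H = 0"
    proof (rule ccontr)
      assume "degree H \<noteq> 0"
      then obtain y where "poly H y = 0" using alg_closed_imp_poly_has_root by blast
      then have "poly M y = 0" using H by simp
      then have "y = l" by (rule onlyl)
      then obtain H' where "H = [:-l,1:] * H'" using \<open>poly H y = 0\<close> by (metis dvdE poly_eq_0_iff_dvd)
      then have "M = [:-l,1:]^2 * H'" using H by (simp only: power2_eq_square mult.assoc)
      then have sq: "[:-l,1:]^2 dvd M" by (rule dvdI)
      show False
        using no_double_root[OF assms(1,4,5) l0 dvd_trans[OF sq M(3)] dvd_trans[OF sq M(4)] assms(9)] .
    qed
    then obtain h where "H = [:h:]" by (metis degree_eq_zeroE)
    moreover have "lead_coeff M = h" using H \<open>H = [:h:]\<close> by (simp add: lead_coeff_mult)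
    ultimately have "M = [:-l,1:]" using M(1) H by simp
    then show ?thesis using M(2) annihilates_lin by metis
  qed
qed

lemma bal_base: "m0 \<in> balanced_set e m0 m"
  unfolding balanced_set_def by (intro CollectI exI[of _ "\<lambda>_. 0::nat"]) simp

lemma bal_step:
  assumes "x \<in> balanced_set d m0 m"
  shows "x \<in> balanced_set (Suc d) m0 m \<and> x + m (Suc d) \<in> balanced_set (Suc d) m0 m"
proof -
  from assms obtain k where x: "x = m0 + (\<Sum>i=1..d. k i * m i)" "\<forall>i\<in>{1..d}. k i \<in> {0,1}"
    by (auto simp: balanced_set_def)
  have s: "(\<Sum>i=1..d. (k(Suc d := v)) i * m i) = (\<Sum>i=1..d. k i * m i)" for v
    by (rule sum.cong) auto
  have k: "\<forall>i\<in>{1..Suc d}. (k(Suc d := v)) i \<in> {0,1}" if "v \<in> {0,1}" for v :: nat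
    using x(2) that by auto
  have "x = m0 + (\<Sum>i=1..Suc d. (k(Suc d := 0)) i * m i)" using x s[of 0] by simp
  then have A: "x \<in> balanced_set (Suc d) m0 m"
    unfolding balanced_set_def using k[of 0] by blast
  have "x + m (Suc d) = m0 + (\<Sum>i=1..Suc d. (k(Suc d := 1)) i * m i)" using x s[of 1] by simp
  then have B: "x + m (Suc d) \<in> balanced_set (Suc d) m0 m"
    unfolding balanced_set_def using k[of 1] by blast
  from A B show ?thesis by blast
qed

lemma main:
  fixes P :: "'b::alg_closed_field poly" and b :: "nat \<Rightarrow> 'b"
  assumes "degree P = d" "P \<noteq> 0" "annihilates P b"
    "\<forall>x. poly P x = 0 \<longrightarrow> x \<noteq> 0"
    "\<forall>x y. poly P x = 0 \<longrightarrow> poly P y = 0 \<longrightarrow> x \<noteq> y \<longrightarrow> \<not>(\<exists>n>0. (x/y)^n = 1)"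
    "(\<forall>x. poly P x = 0 \<longrightarrow> order x P \<le> 1) \<or> (\<forall>k>0. (of_nat k::'b) \<noteq> 0)"
    "\<forall>i\<in>{1..d - 1}. m i > 0"
    "balanced_set (d - 1) m0 m \<subseteq> zero_set b"
  shows "b n = 0"
  using assms
proof (induction d arbitrary: P b n)
  case 0
  then obtain c where "P = [:c:]" by (metis degree_eq_zeroE)
  with 0 have "c \<noteq> 0" "\<forall>n. c * b n = 0" by (auto simp: annihilates_def apply_shift_const)
  then show ?case by simp
next
  case (Suc d)
  obtain l where l: "poly P l = 0" using alg_closed_imp_poly_has_root Suc.prems(1) by force
  have l0: "l \<noteq> 0" using Suc.prems(4) l by auto
  have bm0: "b m0 = 0" using bal_base Suc.prems(8) by (auto simp: zero_set_def)
  have geo: "\<forall>n. b (Suc n) = l * b n"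
  proof (cases "d = 0")
    case True
    obtain H where H: "P = [:-l,1:] * H" using l by (metis dvdE poly_eq_0_iff_dvd)
    have "H \<noteq> 0" using Suc.prems(2) H by auto
    have "degree P = degree [:-l,1:] + degree H" unfolding H by (rule degree_mult_eq) (use \<open>H\<noteq>0\<close> in auto)
    then have "degree H = 0" using Suc.prems(1) True by simp
    then obtain h where h: "H = [:h:]" by (metis degree_eq_zeroE)
    then have "h \<noteq> 0" using \<open>H\<noteq>0\<close> by simp
    have hP: "P = smult h [:-l,1:]" using H h by simp
    have "\<forall>n. h * apply_shift [:-l,1:] b n = 0" using Suc.prems(3)
      unfolding hP annihilates_def apply_shift_smult .
    then have "annihilates [:-l,1:] b" using \<open>h\<noteq>0\<close>
      by (simp add: annihilates_def)
    then show ?thesis using annihilates_lin by blast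
  next
    case False
    then obtain d' where d': "d = Suc d'" by (cases d) auto
    define mm where "mm = m d"
    have mm0: "mm > 0" using Suc.prems(7) False by (simp add: mm_def)
    define T where "T = monom 1 mm + [:-(l^mm):]"
    have Tp: "poly T l = 0" "\<And>n. apply_shift T b n = b (n+mm) - l^mm * b n"
      using T_props[OF T_def mm0] by auto
    obtain Q where Q: "P = [:-l,1:] * Q" using l by (metis dvdE poly_eq_0_iff_dvd)
    obtain S where S: "T = [:-l,1:] * S" using Tp(1) by (metis dvdE poly_eq_0_iff_dvd)
    have Q0: "Q \<noteq> 0" using Suc.prems(2) Q by auto
    have "degree P = degree [:-l,1:] + degree Q" unfolding Q by (rule degree_mult_eq) (use Q0 in auto)
    then have degQ: "degree Q = d" using Suc.prems(1) by simp
    define c where "c = apply_shift T b"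
    have annQ: "annihilates Q c"
      unfolding annihilates_def c_def
    proof
      fix n
      have "apply_shift Q (apply_shift T b) n = apply_shift (S * P) b n"
      proof -
        have "Q * T = S * P" unfolding Q S by (simp only: mult_ac)
        then show ?thesis by (simp only: apply_shift_mult[symmetric])
      qed
      then show "apply_shift Q (apply_shift T b) n = 0"
        using annihilates_mult[OF Suc.prems(3), of S] by (simp add: annihilates_def)
    qed
    have rootsQ: "poly P x = 0" if "poly Q x = 0" for x using that Q by simp
    have ord: "order x Q \<le> order x P" for x
    proof -
      have "Q dvd P" unfolding Q by (rule dvd_triv_right)
      then show ?thesis by (rule dvd_imp_order_le[OF Suc.prems(2)])
    qed
    have "\<forall>n. c n = 0"
    proof
      fix n
      show "c n = 0"
      proof (rule Suc.IH[OF degQ Q0 annQ])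
        show "\<forall>x. poly Q x = 0 \<longrightarrow> x \<noteq> 0" using rootsQ Suc.prems(4) by blast
        show "\<forall>x y. poly Q x = 0 \<longrightarrow> poly Q y = 0 \<longrightarrow> x \<noteq> y \<longrightarrow> \<not>(\<exists>n>0. (x/y)^n = 1)"
          using rootsQ Suc.prems(5) by blast
        show "(\<forall>x. poly Q x = 0 \<longrightarrow> order x Q \<le> 1) \<or> (\<forall>k>0. (of_nat k::'b) \<noteq> 0)"
          using Suc.prems(6) rootsQ ord by (meson le_trans)
        show "\<forall>i\<in>{1..d - 1}. m i > 0" using Suc.prems(7) by auto
        show "balanced_set (d - 1) m0 m \<subseteq> zero_set c"
        proof
          fix x assume "x \<in> balanced_set (d-1) m0 m"
          then have "x \<in> balanced_set d m0 m" "x + mm \<in> balanced_set d m0 m"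
            using bal_step[of x d' m0 m] d' mm_def by auto
          then have "b x = 0" "b (x + mm) = 0" using Suc.prems(8) by (auto simp: zero_set_def)
          then show "x \<in> zero_set c" by (simp add: zero_set_def c_def Tp(2))
        qed
      qed
    qed
    then have "annihilates T b" by (simp add: annihilates_def c_def)
    then show ?thesis using geo_from_T[OF Suc.prems(2,3) _ T_def mm0 l Suc.prems(4,5,6)] by blast
  qed
  have pw: "b (k + j) = l^j * b k" for k j by (induction j) (simp_all add: geo)
  show "b n = 0"
  proof (cases "n \<le> m0")
    case True
    have "b m0 = l^(m0-n) * b n" using pw[of n "m0-n"] True by simp
    then show ?thesis using bm0 l0 by simp
  next
    case False
    then show ?thesis using pw[of m0 "n-m0"] bm0 by simp
  qed
qed

lemma combined:
  fixes a :: "nat \<Rightarrow> 'a::field"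
  assumes "is_recurrence a" and "a \<noteq> (\<lambda>n. 0)" and nd: "nondegenerate a"
    and cs: "CHAR('a) = 0 \<or> simple_rec a"
  shows "\<not> (\<exists>S. S \<subseteq> zero_set a \<and> is_balanced (rec_order a - 1) S)"
proof
  assume "\<exists>S. S \<subseteq> zero_set a \<and> is_balanced (rec_order a - 1) S"
  then obtain m0 m where mpos: "\<forall>i\<in>{1..rec_order a - 1}. m i > 0"
    and sub: "balanced_set (rec_order a - 1) m0 m \<subseteq> zero_set a"
    unfolding is_balanced_def by blast
  define Mp where "Mp = min_poly a"
  have Mp: "lead_coeff Mp = 1" "annihilates Mp a" using min_poly_props[OF assms(1)] by (auto simp: Mp_def)
  define P where "P = map_poly to_ac Mp"
  define b where "b = (\<lambda>n. to_ac (a n))"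
  have degP: "degree P = rec_order a" by (simp add: P_def Mp_def rec_order_def degree_map_poly)
  have "coeff P (degree Mp) = 1" using Mp(1) by (simp add: P_def coeff_map_poly)
  then have P0: "P \<noteq> 0" by auto
  have annP: "annihilates P b"
    unfolding annihilates_def
  proof
    fix n
    have "apply_shift P b n = to_ac (apply_shift Mp a n)"
      by (simp add: apply_shift_def P_def b_def degree_map_poly coeff_map_poly to_ac_sum)
    then show "apply_shift P b n = 0" using Mp(2) by (simp add: annihilates_def)
  qed
  have roots: "min_poly_roots a = {x. poly P x = 0}" by (simp add: min_poly_roots_def P_def Mp_def)
  have r1: "\<forall>x. poly P x = 0 \<longrightarrow> x \<noteq> 0" using nd roots by (auto simp: nondegenerate_def)
  have r2: "\<forall>x y. poly P x = 0 \<longrightarrow> poly P y = 0 \<longrightarrow> x \<noteq> y \<longrightarrow> \<not>(\<exists>n>0. (x/y)^n = 1)"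
    using nd roots unfolding nondegenerate_def by blast
  have r3: "(\<forall>x. poly P x = 0 \<longrightarrow> order x P \<le> 1) \<or> (\<forall>k>0. (of_nat k::'a alg_closure) \<noteq> 0)"
    using cs
  proof
    assume "CHAR('a) = 0"
    then have "\<forall>k>0. (of_nat k::'a alg_closure) \<noteq> 0" by (simp add: of_nat_eq_0_iff_char_dvd)
    then show ?thesis by blast
  next
    assume "simple_rec a"
    then have "\<forall>x. poly P x = 0 \<longrightarrow> order x P \<le> 1"
      using roots by (auto simp: simple_rec_def P_def Mp_def)
    then show ?thesis by blast
  qed
  have zs: "zero_set b = zero_set a" by (simp add: zero_set_def b_def)
  have "b n = 0" for n
    by (rule main[OF degP P0 annP r1 r2 r3 mpos]) (use sub zs in simp)
  then have "a = (\<lambda>n. 0)" by (auto simp: b_def)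
  then show False using assms(2) by simp
qed

theorem lemma2p6:
  fixes a :: "nat \<Rightarrow> 'a::field"
  assumes "is_recurrence a" and "a \<noteq> (\<lambda>n. 0)"
  shows "(CHAR('a) = 0 \<and> nondegenerate a \<longrightarrow>
            \<not> (\<exists>S. S \<subseteq> zero_set a \<and> is_balanced (rec_order a - 1) S))
       \<and> (CHAR('a) > 0 \<and> simple_rec a \<and> nondegenerate a \<longrightarrow>
            \<not> (\<exists>S. S \<subseteq> zero_set a \<and> is_balanced (rec_order a - 1) S))"
  using combined[OF assms] by blast

end
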